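(* Let $\Gamma$ be the banana graph of genus $g\ge1$ with vertices $v_1,v_2$ and edges $e_1,\dots,e_n$, $n=g+1$. Let $B\in\mathbb Z^{g\times n}$ with $B_{i,1}=1$, $B_{i,i+1}=-1$, other entries $0$, $Q=BB^T$, and for a vertex $\mathbf a$ of $V_Q$ let $\iota_{\mathbf a}$ be the orientation in which $e_i$ goes from $v_2$ to $v_1$ if $(B^T\mathbf a)_i>0$ and from $v_1$ to $v_2$ if $(B^T\mathbf a)_i<0$. For vertices $\mathbf a,\mathbf a'$ of $V_Q$ and $k\in\{1,\dots,g\}$: $\mathbf a\sim\mathbf a'$ with $\mathbf a,\mathbf a'\in[\mathbf k]$ if and only if both $\iota_{\mathbf a}$ and $\iota_{\mathbf a'}$ have exactly $k$ edges outgoing at $v_1$. Equivalently, for $\mathbf a\ne\mathbf a'$, $\mathbf a\sim\mathbf a'$ if and only if the set of edges whose orientation in $\iota_{\mathbf a'}$ differs from that in $\iota_{\mathbf a}$ forms a circuit in $\iota_{\mathbf a}$ (i.e., these edges can be traversed as a closed directed trail in $\iota_{\mathbf a}$, each edge used once).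
   Context: $V_Q=\{\mathbf a\in\mathbb R^g:\ \mathbf a^TQ\mathbf a\le(\mathbf a-\mathbf c)^TQ(\mathbf a-\mathbf c)\ \forall\mathbf c\in\mathbb Z^g\}$; its vertices are $\bigcup_{k=1}^g[\mathbf k]$ where $[\mathbf k]\subset\mathbb R^g$ is the set of vectors with entries in $\{-\tfrac{k}{g+1},\tfrac{g+1-k}{g+1}\}$ having $k$ or $k-1$ entries equal to $\tfrac{g+1-k}{g+1}$. For a vertex $\mathbf a$, $\mathcal D_{\mathbf a,Q}=\{\mathbf c\in\mathbb Z^g:\mathbf a^TQ\mathbf a=(\mathbf a-\mathbf c)^TQ(\mathbf a-\mathbf c)\}$, and $\mathbf a\sim\mathbf a'$ iff $\mathbf a'=\mathbf a-\mathbf c_0$ for some $\mathbf c_0\in\mathcal D_{\mathbf a,Q}$. The orientations $\iota_{\mathbf a}$ are exactly the strongly connected orientations of $\Gamma$. *)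

theory Defs
  imports Complex_Main
begin

text \<open>Banana graph of genus g: vertices v1 = 1, v2 = 2, edges e_1..e_n with n = g+1.
  Vectors in R^g / Z^g are functions nat => real supported on {1..g}.\<close>

definition nedges :: "nat \<Rightarrow> nat" where "nedges g = g + 1"

definition Bmat :: "nat \<Rightarrow> nat \<Rightarrow> int" where
  "Bmat i j = (if j = 1 then 1 else if j = i + 1 then -1 else 0)"

definition Qmat :: "nat \<Rightarrow> nat \<Rightarrow> nat \<Rightarrow> int" where
  "Qmat g i j = (\<Sum>l = 1..nedges g. Bmat i l * Bmat j l)"

definition qform :: "nat \<Rightarrow> (nat \<Rightarrow> real) \<Rightarrow> real" where
  "qform g a = (\<Sum>i = 1..g. \<Sum>j = 1..g. a i * of_int (Qmat g i j) * a j)"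

definition supported :: "nat \<Rightarrow> (nat \<Rightarrow> real) \<Rightarrow> bool" where
  "supported g a \<longleftrightarrow> (\<forall>i. i \<notin> {1..g} \<longrightarrow> a i = 0)"

definition lattice_vec :: "nat \<Rightarrow> (nat \<Rightarrow> real) \<Rightarrow> bool" where
  "lattice_vec g c \<longleftrightarrow> supported g c \<and> (\<forall>i \<in> {1..g}. c i \<in> \<int>)"

definition voronoi :: "nat \<Rightarrow> (nat \<Rightarrow> real) set" where
  "voronoi g = {a. supported g a \<and> (\<forall>c. lattice_vec g c \<longrightarrow> qform g a \<le> qform g (a - c))}"

definition bracket :: "nat \<Rightarrow> nat \<Rightarrow> (nat \<Rightarrow> real) set" where
  "bracket g k = {a. supported g a
     \<and> (\<forall>i \<in> {1..g}. a i = - real k / real (g + 1) \<or> a i = real (g + 1 - k) / real (g + 1))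
     \<and> card {i \<in> {1..g}. a i = real (g + 1 - k) / real (g + 1)} \<in> {k, k - 1}}"

text \<open>Vertices of V_Q, as given in the context: the union of the [k], k = 1..g.\<close>
definition voronoi_vertices :: "nat \<Rightarrow> (nat \<Rightarrow> real) set" where
  "voronoi_vertices g = (\<Union>k \<in> {1..g}. bracket g k)"

definition Dset :: "nat \<Rightarrow> (nat \<Rightarrow> real) \<Rightarrow> (nat \<Rightarrow> real) set" where
  "Dset g a = {c. lattice_vec g c \<and> qform g a = qform g (a - c)}"

definition vsim :: "nat \<Rightarrow> (nat \<Rightarrow> real) \<Rightarrow> (nat \<Rightarrow> real) \<Rightarrow> bool" where
  "vsim g a a' \<longleftrightarrow> (\<exists>c0 \<in> Dset g a. a' = a - c0)"

definition BT :: "nat \<Rightarrow> (nat \<Rightarrow> real) \<Rightarrow> nat \<Rightarrow> real" where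
  "BT g a j = (\<Sum>i = 1..g. of_int (Bmat i j) * a i)"

text \<open>Orientation iota_a: edge j is oriented as (tail, head); v1 = 1, v2 = 2.\<close>
definition iota :: "nat \<Rightarrow> (nat \<Rightarrow> real) \<Rightarrow> nat \<Rightarrow> nat \<times> nat" where
  "iota g a j = (if BT g a j > 0 then (2, 1) else if BT g a j < 0 then (1, 2) else undefined)"

definition out_count_v1 :: "nat \<Rightarrow> (nat \<Rightarrow> nat \<times> nat) \<Rightarrow> nat" where
  "out_count_v1 n ori = card {j \<in> {1..n}. fst (ori j) = 1}"

definition differ_edges :: "nat \<Rightarrow> (nat \<Rightarrow> nat \<times> nat) \<Rightarrow> (nat \<Rightarrow> nat \<times> nat) \<Rightarrow> nat set" where
  "differ_edges n ori ori' = {j \<in> {1..n}. ori j \<noteq> ori' j}"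

definition is_circuit :: "(nat \<Rightarrow> nat \<times> nat) \<Rightarrow> nat set \<Rightarrow> bool" where
  "is_circuit ori S \<longleftrightarrow> (\<exists>es. es \<noteq> [] \<and> distinct es \<and> set es = S \<and>
      (\<forall>j < length es. snd (ori (es ! j)) = fst (ori (es ! ((j + 1) mod length es)))))"

end

theory Submission
  imports Defs
begin


lemma BT_1: "BT g a 1 = (\<Sum>i=1..g. a i)"
  by (simp add: BT_def Bmat_def)

lemma BT_Suc: assumes "1 \<le> i" "i \<le> g" shows "BT g a (Suc i) = - a i"
proof -
  have "BT g a (Suc i) = (\<Sum>l=1..g. if l = i then - a l else 0)"
    unfolding BT_def Bmat_def using assms by (intro sum.cong) auto
  also have "\<dots> = - a i" using assms by (simp add: sum.delta)
  finally show ?thesis .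
qed

lemma qform_BT: "qform g a = (\<Sum>j=1..nedges g. (BT g a j)^2)"
proof -
  have "qform g a = (\<Sum>i=1..g. \<Sum>j=1..g. \<Sum>l=1..nedges g. (of_int (Bmat i l) * a i) * (of_int (Bmat j l) * a j))"
    unfolding qform_def Qmat_def
    by (simp add: sum_distrib_left sum_distrib_right mult_ac)
  also have "\<dots> = (\<Sum>l=1..nedges g. \<Sum>i=1..g. \<Sum>j=1..g. (of_int (Bmat i l) * a i) * (of_int (Bmat j l) * a j))"
  proof -
    have "\<And>i. (\<Sum>j=1..g. \<Sum>l=1..nedges g. (of_int (Bmat i l) * a i) * (of_int (Bmat j l) * a j))
      = (\<Sum>l=1..nedges g. \<Sum>j=1..g. (of_int (Bmat i l) * a i) * (of_int (Bmat j l) * a j))"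
      by (rule sum.swap)
    then show ?thesis by (simp only:) (rule sum.swap)
  qed
  also have "\<dots> = (\<Sum>j=1..nedges g. (BT g a j)^2)"
    unfolding BT_def power2_eq_square sum_product by simp
  finally show ?thesis .
qed

lemma vertex_props:
  assumes a: "a \<in> bracket g k" and k: "1 \<le> k" "k \<le> g"
  shows "\<forall>j\<in>{1..g+1}. BT g a j = real k / real (g+1) \<or> BT g a j = - (real (g+1-k) / real (g+1))"
    and "card {j\<in>{1..g+1}. BT g a j < 0} = k"
proof -
  define hi where "hi = real (g+1-k) / real (g+1)"
  define lo where "lo = - real k / real (g+1)"
  have n0: "real (g+1) > 0" by simp
  have hilo: "hi = 1 + lo" unfolding hi_def lo_def using k n0 by (simp add: field_simps of_nat_diff)
  have hipos: "hi > 0" unfolding hi_def using k by simp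
  have loneg: "lo < 0" unfolding lo_def using k by simp
  define S where "S = {i\<in>{1..g}. a i = hi}"
  have vals: "\<forall>i\<in>{1..g}. a i = lo \<or> a i = hi" using a unfolding bracket_def hi_def lo_def by auto
  have m: "card S = k \<or> card S = k - 1" using a unfolding bracket_def hi_def S_def by auto
  have finS: "finite S" unfolding S_def by simp
  have ai: "a i = lo + (if i \<in> S then 1 else 0)" if "i \<in> {1..g}" for i
    using vals that hilo unfolding S_def by auto
  have "sum a {1..g} = (\<Sum>i=1..g. lo + (if i \<in> S then 1 else 0))"
    using ai by (intro sum.cong) auto
  also have "\<dots> = real g * lo + (\<Sum>i=1..g. (if i \<in> S then 1 else 0))"
    by (simp add: sum.distrib)
  also have "(\<Sum>i=1..g. (if i \<in> S then 1 else 0)) = (\<Sum>i\<in>{1..g} \<inter> S. 1::real)"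
    by (rule sum.inter_restrict[symmetric]) simp
  also have "{1..g} \<inter> S = S" unfolding S_def by auto
  finally have suma: "sum a {1..g} = real g * lo + real (card S)" by simp
  have case1: "card S = k \<Longrightarrow> sum a {1..g} = real k / real (g+1)"
    using suma n0 unfolding lo_def by (simp add: field_simps)
  have case2: "card S = k - 1 \<Longrightarrow> card S \<noteq> k \<Longrightarrow> sum a {1..g} = - hi"
    using suma n0 k unfolding lo_def hi_def by (simp add: field_simps of_nat_diff)
  have knpos: "real k / real (g+1) > 0" using k by simp
  show "\<forall>j\<in>{1..g+1}. BT g a j = real k / real (g+1) \<or> BT g a j = - (real (g+1-k) / real (g+1))"
  proof
    fix j assume j: "j \<in> {1..g+1}"
    show "BT g a j = real k / real (g+1) \<or> BT g a j = - (real (g+1-k) / real (g+1))"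
    proof (cases "j = 1")
      case True
      have "k - 1 \<noteq> k" using k by simp
      then show ?thesis using case1 case2 m BT_1[of g a] True unfolding hi_def by metis
    next
      case False
      then obtain i where i: "j = Suc i" "i \<in> {1..g}" using j by (cases j) auto
      then have "BT g a j = - a i" using BT_Suc by auto
      moreover have "a i = lo \<or> a i = hi" using vals i by blast
      ultimately show ?thesis unfolding hi_def lo_def by auto
    qed
  qed
  have eq: "{j\<in>{1..g+1}. BT g a j < 0} = (if card S = k then {} else {1}) \<union> Suc ` S"
  proof (rule set_eqI)
    fix j
    show "j \<in> {j\<in>{1..g+1}. BT g a j < 0} \<longleftrightarrow> j \<in> (if card S = k then {} else {1}) \<union> Suc ` S"
    proof (cases "j = 1")
      case True
      have "0 \<notin> S" "k - 1 \<noteq> k" unfolding S_def using k by auto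
      show ?thesis
      proof (cases "card S = k")
        case c: True
        then have "BT g a j = real k / real (g+1)" using case1 BT_1[of g a] True by simp
        then show ?thesis using knpos c True \<open>0 \<notin> S\<close> by auto
      next
        case c: False
        then have "BT g a j = - hi" using case2 m BT_1[of g a] True by simp
        then show ?thesis using hipos c True \<open>0 \<notin> S\<close> by auto
      qed
    next
      case False
      show ?thesis
      proof (cases "j \<in> {1..g+1}")
        case True
        then obtain i where i: "j = Suc i" "i \<in> {1..g}" using False by (cases j) auto
        then have "BT g a j = - a i" using BT_Suc by auto
        moreover have "a i = lo \<or> a i = hi" using vals i by blast
        ultimately show ?thesis using i False hipos loneg unfolding S_def by auto
      next
        case F2: False
        then show ?thesis using False unfolding S_def by auto
      qed
    qed
  qed
  show "card {j\<in>{1..g+1}. BT g a j < 0} = k"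
  proof -
    have "Suc 0 \<notin> Suc ` S" unfolding S_def by auto
    then show ?thesis unfolding eq using m finS k by (auto simp: card_image card_insert_if)
  qed
qed

lemma iota_vals:
  assumes a: "a \<in> bracket g k" and k: "1 \<le> k" "k \<le> g" and j: "j \<in> {1..g+1}"
  shows "(iota g a j = (1,2) \<and> BT g a j < 0) \<or> (iota g a j = (2,1) \<and> BT g a j > 0)"
proof -
  have "BT g a j = real k / real (g+1) \<or> BT g a j = - (real (g+1-k) / real (g+1))"
    using vertex_props(1)[OF a k] j by blast
  moreover have "real k / real (g+1) > 0" "real (g+1-k) / real (g+1) > 0" using k by auto
  ultimately show ?thesis unfolding iota_def by auto
qed

lemma out_count:
  assumes a: "a \<in> bracket g k" and k: "1 \<le> k" "k \<le> g"
  shows "out_count_v1 (nedges g) (iota g a) = k"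
proof -
  have "{j\<in>{1..nedges g}. fst (iota g a j) = 1} = {j\<in>{1..g+1}. BT g a j < 0}"
    unfolding nedges_def using iota_vals[OF a k] by fastforce
  then show ?thesis unfolding out_count_v1_def using vertex_props(2)[OF a k] by simp
qed

lemma qform_val:
  assumes a: "a \<in> bracket g k" and k: "1 \<le> k" "k \<le> g"
  shows "qform g a = real k * (real (g+1-k) / real (g+1))^2 + real (g+1-k) * (real k / real (g+1))^2"
proof -
  define A where "A = {1..g+1}"
  define N where "N = {j\<in>A. BT g a j < 0}"
  have fin: "finite A" and NA: "N \<subseteq> A" unfolding A_def N_def by auto
  have cN: "card N = k" unfolding N_def A_def using vertex_props(2)[OF a k] .
  have cA: "card (A - N) = g + 1 - k" using card_Diff_subset[OF finite_subset[OF NA fin] NA] cN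
    unfolding A_def by simp
  have vals: "\<forall>j\<in>A. BT g a j = real k / real (g+1) \<or> BT g a j = - (real (g+1-k) / real (g+1))"
    using vertex_props(1)[OF a k] unfolding A_def .
  have pos: "real k / real (g+1) > 0" "real (g+1-k) / real (g+1) > 0" using k by auto
  have "qform g a = (\<Sum>j\<in>A. (BT g a j)^2)" unfolding qform_BT A_def nedges_def by simp
  also have "\<dots> = (\<Sum>j\<in>A - N. (BT g a j)^2) + (\<Sum>j\<in>N. (BT g a j)^2)"
    by (rule sum.subset_diff[OF NA fin])
  also have "(\<Sum>j\<in>N. (BT g a j)^2) = (\<Sum>j\<in>N. (real (g+1-k) / real (g+1))^2)"
  proof (rule sum.cong[OF refl])
    fix j assume "j \<in> N"
    then have "j \<in> A" "BT g a j < 0" unfolding N_def by auto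
    then have "BT g a j = - (real (g+1-k) / real (g+1))" using vals pos by force
    then show "(BT g a j)^2 = (real (g+1-k) / real (g+1))^2" by simp
  qed
  also have "(\<Sum>j\<in>A - N. (BT g a j)^2) = (\<Sum>j\<in>A - N. (real k / real (g+1))^2)"
  proof (rule sum.cong[OF refl])
    fix j assume "j \<in> A - N"
    then have "j \<in> A" "\<not> BT g a j < 0" unfolding N_def by auto
    moreover have "BT g a j = real k / real (g+1) \<or> BT g a j = - (real (g+1-k) / real (g+1))"
      using vals \<open>j \<in> A\<close> by blast
    moreover have "BT g a j \<noteq> - (real (g+1-k) / real (g+1))"
      using pos(2) \<open>\<not> BT g a j < 0\<close> by (metis neg_less_0_iff_less)
    ultimately have "BT g a j = real k / real (g+1)" by blast
    then show "(BT g a j)^2 = (real k / real (g+1))^2" by simp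
  qed
  finally show ?thesis using cN cA by simp
qed

lemma bracket_unique:
  assumes "a \<in> bracket g k" "1 \<le> k" "k \<le> g" "a \<in> bracket g k'" "1 \<le> k'" "k' \<le> g"
  shows "k = k'"
  using out_count[OF assms(1-3)] out_count[OF assms(4-6)] by simp

lemma bracket_vals:
  assumes "a \<in> bracket g k" "i \<in> {1..g}" "1 \<le> k" "k \<le> g"
  shows "a i = - real k / real (g+1) \<or> a i = - real k / real (g+1) + 1"
proof -
  have "real (g + 1 - k) / real (g + 1) = - real k / real (g+1) + 1"
    using assms(3,4) by (simp add: field_simps of_nat_diff)
  then show ?thesis using assms unfolding bracket_def by auto
qed

lemma sim_same:
  assumes a: "a \<in> bracket g k" and a': "a' \<in> bracket g k" and k: "1 \<le> k" "k \<le> g"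
  shows "vsim g a a'"
proof -
  define c where "c = a - a'"
  have sup: "supported g c" using a a' unfolding c_def bracket_def supported_def by auto
  have "c i \<in> \<int>" if i: "i \<in> {1..g}" for i
  proof -
    have "a i = - real k / real (g+1) \<or> a i = - real k / real (g+1) + 1"
      "a' i = - real k / real (g+1) \<or> a' i = - real k / real (g+1) + 1"
      using bracket_vals[OF a i k] bracket_vals[OF a' i k] by auto
    then have "c i = 0 \<or> c i = 1 \<or> c i = -1" unfolding c_def by auto
    then show ?thesis by auto
  qed
  then have lat: "lattice_vec g c" using sup unfolding lattice_vec_def by auto
  have eq: "a - c = a'" unfolding c_def by (rule ext) simp
  have "qform g a = qform g a'" using qform_val[OF a k] qform_val[OF a' k] by simp
  then have "c \<in> Dset g a" using lat eq unfolding Dset_def by simp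
  then show ?thesis unfolding vsim_def using eq by auto
qed

lemma sim_k:
  assumes v: "vsim g a a'" and a: "a \<in> bracket g k" and a': "a' \<in> bracket g k'"
    and k: "1 \<le> k" "k \<le> g" and k': "1 \<le> k'" "k' \<le> g"
  shows "k = k'"
proof -
  obtain c where c: "lattice_vec g c" "a' = a - c" using v unfolding vsim_def Dset_def by auto
  have g1: "1 \<in> {1..g}" using k by auto
  have ci: "c 1 \<in> \<int>" using c(1) g1 unfolding lattice_vec_def by auto
  obtain x where x: "x \<in> {0,1}" "a 1 = - real k / real (g+1) + x"
    using bracket_vals[OF a g1 k] by force
  obtain x' where x': "x' \<in> {0,1}" "a' 1 = - real k' / real (g+1) + x'"
    using bracket_vals[OF a' g1 k'] by force
  have "c 1 = a 1 - a' 1" using c(2) by simp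
  then have "c 1 - x + x' = (- real k / real (g+1) + x) - (- real k' / real (g+1) + x') - x + x'"
    using x x' by simp
  also have "\<dots> = (real k' - real k) / real (g+1)" by (simp add: diff_divide_distrib)
  finally have "c 1 - x + x' = (real k' - real k) / real (g+1)" .
  moreover have "c 1 - x + x' \<in> \<int>" using ci x x' by auto
  moreover obtain z where "c 1 - x + x' = of_int z" using \<open>c 1 - x + x' \<in> \<int>\<close> by (auto elim: Ints_cases)
  ultimately have z: "(real k' - real k) / real (g+1) = of_int z" by simp
  then have "real k' - real k = of_int z * real (g+1)" by (simp add: field_simps)
  then have "real_of_int (int k' - int k) = real_of_int (z * int (g+1))" by simp
  then have zi: "int k' - int k = z * int (g+1)" by (simp only: of_int_eq_iff)
  show ?thesis
  proof (cases "z = 0")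
    case True then show ?thesis using zi by simp
  next
    case False
    then have "z \<ge> 1 \<or> z \<le> -1" by auto
    then show ?thesis
    proof
      assume "z \<ge> 1"
      then have "z * int (g+1) \<ge> 1 * int (g+1)" by (intro mult_right_mono) auto
      then have "int k' - int k \<ge> int (g+1)" by (metis mult_1 zi)
      then have False using k k' by linarith
      then show ?thesis ..
    next
      assume "z \<le> -1"
      then have "z * int (g+1) \<le> -1 * int (g+1)" by (intro mult_right_mono) auto
      then have "int k' - int k \<le> - int (g+1)" by (metis mult_minus1 zi)
      then have False using k k' by linarith
      then show ?thesis ..
    qed
  qed
qed

lemma circ_count:
  fixes ori :: "nat \<Rightarrow> nat \<times> nat"
  assumes dist: "distinct es"
    and alt: "\<forall>j < length es. snd (ori (es ! j)) = fst (ori (es ! ((j + 1) mod length es)))"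
    and vals: "\<forall>x\<in>set es. ori x = (u,v) \<or> ori x = (v,u)" and uv: "u \<noteq> v"
  shows "card {x\<in>set es. ori x = (u,v)} \<le> card {x\<in>set es. ori x = (v,u)}"
proof -
  define L where "L = length es"
  define J where "J = {j. j < L \<and> ori (es ! j) = (u,v)}"
  define h where "h j = es ! ((j + 1) mod L)" for j
  have finJ: "finite J" unfolding J_def by simp
  have img: "{x\<in>set es. ori x = (u,v)} = (\<lambda>j. es ! j) ` J"
    unfolding J_def L_def by (auto simp: in_set_conv_nth)
  have c1: "card {x\<in>set es. ori x = (u,v)} \<le> card J"
    unfolding img by (rule card_image_le[OF finJ])
  have inj: "inj_on h J"
  proof (rule inj_onI)
    fix i j assume i: "i \<in> J" and j: "j \<in> J" and e: "h i = h j"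
    have L0: "L > 0" using i unfolding J_def by auto
    have iL: "i < L" and jL: "j < L" using i j unfolding J_def by auto
    have "(i + 1) mod L < length es" "(j + 1) mod L < length es" using L0 unfolding L_def by auto
    then have eqm: "(i + 1) mod L = (j + 1) mod L"
      using e nth_eq_iff_index_eq[OF dist] unfolding h_def by blast
    have md: "(x + 1) mod L = (if x + 1 = L then 0 else x + 1)" if "x < L" for x
      using that by auto
    show "i = j" using eqm md[OF iL] md[OF jL] iL jL by (auto split: if_splits)
  qed
  have sub: "h ` J \<subseteq> {x\<in>set es. ori x = (v,u)}"
  proof
    fix y assume "y \<in> h ` J"
    then obtain j where j: "j \<in> J" "y = h j" by auto
    have jL: "j < L" and oj: "ori (es ! j) = (u,v)" using j unfolding J_def by auto
    have mL: "(j + 1) mod L < L" using jL by simp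
    have ym: "y \<in> set es" using j(2) mL unfolding h_def L_def by simp
    have "fst (ori y) = v" using alt jL oj j(2) unfolding h_def L_def by force
    moreover have "ori y = (u,v) \<or> ori y = (v,u)" using vals ym by blast
    ultimately have "ori y = (v,u)" using uv by (metis fst_conv)
    then show "y \<in> {x\<in>set es. ori x = (v,u)}" using ym by simp
  qed
  have "card J = card (h ` J)" using card_image[OF inj] by simp
  also have "\<dots> \<le> card {x\<in>set es. ori x = (v,u)}" by (rule card_mono[OF _ sub]) simp
  finally show ?thesis using c1 by simp
qed

lemma circ_build:
  fixes ori :: "nat \<Rightarrow> nat \<times> nat"
  assumes fP: "finite P" and fR: "finite R" and disj: "P \<inter> R = {}" and cPR: "card P = card R"
    and p1: "card P \<ge> 1" and oP: "\<forall>x\<in>P. ori x = (1,2)" and oR: "\<forall>x\<in>R. ori x = (2,1)"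
  shows "is_circuit ori (P \<union> R)"
proof -
  define p where "p = card P"
  define ps where "ps = sorted_list_of_set P"
  define rs where "rs = sorted_list_of_set R"
  have lps: "length ps = p" and lrs: "length rs = p" and sps: "set ps = P" and srs: "set rs = R"
    using fP fR cPR unfolding ps_def rs_def p_def by auto
  define es where "es = map (\<lambda>j. if even j then ps ! (j div 2) else rs ! (j div 2)) [0..<2*p]"
  have les: "length es = 2 * p" unfolding es_def by simp
  have nth: "es ! j = (if even j then ps ! (j div 2) else rs ! (j div 2))" if "j < 2 * p" for j
    using that unfolding es_def by simp
  have inPR: "es ! j \<in> (if even j then P else R)" if "j < 2 * p" for j
  proof -
    have "j div 2 < p" using that by simp
    then show ?thesis using nth[OF that] lps lrs sps srs by (auto intro: nth_mem)
  qed
  have ori_es: "ori (es ! j) = (if even j then (1,2) else (2,1))" if "j < 2 * p" for j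
    using inPR[OF that] oP oR by (cases "even j") auto
  have set1: "set es \<subseteq> P \<union> R"
  proof
    fix x assume "x \<in> set es"
    then obtain i where i: "i < 2 * p" "x = es ! i" using les by (auto simp: in_set_conv_nth)
    then show "x \<in> P \<union> R" using inPR[OF i(1)] by (cases "even i") auto
  qed
  have set2: "P \<subseteq> set es"
  proof
    fix x assume "x \<in> P"
    then obtain t where t: "t < p" "x = ps ! t" using sps lps by (auto simp: in_set_conv_nth)
    then have "x = es ! (2 * t)" using nth[of "2*t"] by simp
    then show "x \<in> set es" using t les by simp
  qed
  have set3: "R \<subseteq> set es"
  proof
    fix x assume "x \<in> R"
    then obtain t where t: "t < p" "x = rs ! t" using srs lrs by (auto simp: in_set_conv_nth)
    then have "x = es ! (2 * t + 1)" using nth[of "2*t+1"] by simp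
    then show "x \<in> set es" using t les by simp
  qed
  have seteq: "set es = P \<union> R" using set1 set2 set3 by auto
  have "card (set es) = length es" unfolding seteq les using card_Un_disjoint[OF fP fR disj] cPR p_def by simp
  then have dist: "distinct es" by (rule card_distinct)
  have ne: "es \<noteq> []" using les p1 p_def by auto
  have alt: "\<forall>j < length es. snd (ori (es ! j)) = fst (ori (es ! ((j + 1) mod length es)))"
  proof (intro allI impI)
    fix j assume j: "j < length es"
    have m: "(j + 1) mod (2 * p) < 2 * p" using j les by simp
    have mm: "((j + 1) mod (2 * p)) mod 2 = (j+1) mod 2" by (simp add: mod_mod_cancel)
    have par: "even ((j + 1) mod (2 * p)) \<longleftrightarrow> odd j"
    proof -
      have "even ((j + 1) mod (2 * p)) \<longleftrightarrow> even (j + 1)" by (simp only: even_iff_mod_2_eq_zero mm)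
      then show ?thesis by simp
    qed
    have o1: "ori (es ! j) = (if even j then (1,2) else (2,1))" using ori_es j les by simp
    have o2: "ori (es ! ((j + 1) mod length es)) = (if odd j then (1,2) else (2,1))"
      using ori_es[OF m] par les by simp
    show "snd (ori (es ! j)) = fst (ori (es ! ((j + 1) mod length es)))"
      using o1 o2 by (cases "even j") simp_all
  qed
  show ?thesis unfolding is_circuit_def using ne dist seteq alt by blast
qed



theorem corollary3p11:
  fixes g :: nat and a a' :: "nat \<Rightarrow> real"
  assumes "g \<ge> 1"
    and "a \<in> voronoi_vertices g" and "a' \<in> voronoi_vertices g"
  shows "(\<forall>k \<in> {1..g}.
            (vsim g a a' \<and> a \<in> bracket g k \<and> a' \<in> bracket g k) \<longleftrightarrow>
            (out_count_v1 (nedges g) (iota g a) = k \<and> out_count_v1 (nedges g) (iota g a') = k))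
       \<and> (a \<noteq> a' \<longrightarrow>
            (vsim g a a' \<longleftrightarrow>
             is_circuit (iota g a) (differ_edges (nedges g) (iota g a) (iota g a'))))"
proof -
  obtain ka where ka: "1 \<le> ka" "ka \<le> g" "a \<in> bracket g ka"
    using assms(2) unfolding voronoi_vertices_def by auto
  obtain kb where kb: "1 \<le> kb" "kb \<le> g" "a' \<in> bracket g kb"
    using assms(3) unfolding voronoi_vertices_def by auto
  have oa: "out_count_v1 (nedges g) (iota g a) = ka" using out_count[OF ka(3) ka(1,2)] .
  have ob: "out_count_v1 (nedges g) (iota g a') = kb" using out_count[OF kb(3) kb(1,2)] .
  have sim_iff: "vsim g a a' \<longleftrightarrow> ka = kb"
    using sim_k[OF _ ka(3) kb(3) ka(1,2) kb(1,2)] sim_same[OF ka(3) _ ka(1,2), of a'] kb(3) by blast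
  have P1: "\<forall>k \<in> {1..g}.
            (vsim g a a' \<and> a \<in> bracket g k \<and> a' \<in> bracket g k) \<longleftrightarrow>
            (out_count_v1 (nedges g) (iota g a) = k \<and> out_count_v1 (nedges g) (iota g a') = k)"
  proof
    fix k assume k: "k \<in> {1..g}"
    show "(vsim g a a' \<and> a \<in> bracket g k \<and> a' \<in> bracket g k) \<longleftrightarrow>
            (out_count_v1 (nedges g) (iota g a) = k \<and> out_count_v1 (nedges g) (iota g a') = k)"
    proof
      assume h: "vsim g a a' \<and> a \<in> bracket g k \<and> a' \<in> bracket g k"
      then have "k = ka" "k = kb" using bracket_unique ka kb k by auto
      then show "out_count_v1 (nedges g) (iota g a) = k \<and> out_count_v1 (nedges g) (iota g a') = k"
        using oa ob by simp
    next
      assume "out_count_v1 (nedges g) (iota g a) = k \<and> out_count_v1 (nedges g) (iota g a') = k"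
      then have "ka = k" "kb = k" using oa ob by auto
      then show "vsim g a a' \<and> a \<in> bracket g k \<and> a' \<in> bracket g k" using sim_iff ka kb by auto
    qed
  qed
  have P2: "a \<noteq> a' \<longrightarrow>
            (vsim g a a' \<longleftrightarrow>
             is_circuit (iota g a) (differ_edges (nedges g) (iota g a) (iota g a')))"
  proof
    assume ne: "a \<noteq> a'"
    define ori where "ori = iota g a"
    define ori' where "ori' = iota g a'"
    define A where "A = {1..g+1}"
    define D where "D = differ_edges (nedges g) ori ori'"
    have Deq: "D = {j\<in>A. ori j \<noteq> ori' j}" unfolding D_def differ_edges_def A_def nedges_def by simp
    have vo: "\<And>j. j \<in> A \<Longrightarrow> ori j = (1,2) \<or> ori j = (2,1)"
      unfolding ori_def A_def using iota_vals[OF ka(3) ka(1,2)] by blast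
    have vo': "\<And>j. j \<in> A \<Longrightarrow> ori' j = (1,2) \<or> ori' j = (2,1)"
      unfolding ori'_def A_def using iota_vals[OF kb(3) kb(1,2)] by blast
    define P where "P = {j\<in>D. ori j = (1,2)}"
    define R where "R = {j\<in>D. ori j = (2,1)}"
    define C where "C = {j\<in>A. ori j = (1,2) \<and> ori' j = (1,2)}"
    have finA: "finite A" unfolding A_def by simp
    have fP: "finite P" and fR: "finite R" and fC: "finite C" unfolding P_def R_def C_def Deq using finA by auto
    have PR: "P \<inter> R = {}" unfolding P_def R_def by auto
    have DPR: "D = P \<union> R" unfolding P_def R_def Deq using vo by auto
    have O1: "{j\<in>{1..nedges g}. fst (ori j) = 1} = C \<union> P"
      unfolding C_def P_def Deq A_def[symmetric] nedges_def[symmetric]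
      apply (rule set_eqI) subgoal for j using vo[of j] vo'[of j] unfolding A_def nedges_def by auto done
    have O2: "{j\<in>{1..nedges g}. fst (ori' j) = 1} = C \<union> R"
      apply (rule set_eqI) subgoal for j using vo[of j] vo'[of j] unfolding C_def R_def Deq A_def nedges_def by auto done
    have CP: "C \<inter> P = {}" "C \<inter> R = {}" unfolding C_def P_def R_def Deq by auto
    have "ka = card C + card P" using oa O1 card_Un_disjoint[OF fC fP CP(1)]
      unfolding out_count_v1_def ori_def by simp
    moreover have "kb = card C + card R" using ob O2 card_Un_disjoint[OF fC fR CP(2)]
      unfolding out_count_v1_def ori'_def by simp
    ultimately have kPR: "ka = kb \<longleftrightarrow> card P = card R" by simp
    show "vsim g a a' \<longleftrightarrow> is_circuit (iota g a) (differ_edges (nedges g) (iota g a) (iota g a'))"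
      unfolding ori_def[symmetric] ori'_def[symmetric] D_def[symmetric] sim_iff kPR
    proof
      assume cPR: "card P = card R"
      then have kk: "ka = kb" using kPR by simp
      obtain i where i: "a i \<noteq> a' i" using ne by auto
      have "supported g a" "supported g a'" using ka(3) kb(3) unfolding bracket_def by auto
      then have iG: "i \<in> {1..g}" using i unfolding supported_def by metis
      have "a i = - real ka / real (g+1) \<or> a i = - real ka / real (g+1) + 1"
        using bracket_vals[OF ka(3) iG ka(1,2)] .
      moreover have "a' i = - real ka / real (g+1) \<or> a' i = - real ka / real (g+1) + 1"
        using bracket_vals[OF kb(3) iG kb(1,2)] kk by simp
      moreover have "- real ka / real (g+1) < 0" "- real ka / real (g+1) + 1 > 0"
        using ka by (auto simp: field_simps)
      ultimately have sgn: "(a i < 0 \<and> a' i > 0) \<or> (a i > 0 \<and> a' i < 0)" using i by auto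
      have SA: "Suc i \<in> A" using iG unfolding A_def by auto
      have "BT g a (Suc i) = - a i" "BT g a' (Suc i) = - a' i" using BT_Suc iG by auto
      then have "ori (Suc i) \<noteq> ori' (Suc i)"
        using sgn iota_vals[OF ka(3) ka(1,2), of "Suc i"] iota_vals[OF kb(3) kb(1,2), of "Suc i"] SA
        unfolding ori_def ori'_def A_def by auto
      then have "Suc i \<in> D" using SA unfolding Deq by auto
      then have "D \<noteq> {}" by auto
      then have "P \<noteq> {} \<or> R \<noteq> {}" using DPR by auto
      then have "card P \<noteq> 0 \<or> card R \<noteq> 0" using fP fR by auto
      then have "card P \<ge> 1" using cPR by auto
      then show "is_circuit ori D" unfolding DPR
        using circ_build[OF fP fR PR cPR] unfolding P_def R_def by auto
    next
      assume "is_circuit ori D"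
      then obtain es where es: "distinct es" "set es = D"
        "\<forall>j < length es. snd (ori (es ! j)) = fst (ori (es ! ((j + 1) mod length es)))"
        unfolding is_circuit_def by auto
      have vals: "\<forall>x\<in>set es. ori x = (1,2) \<or> ori x = (2,1)" using es(2) vo unfolding Deq by auto
      have vals2: "\<forall>x\<in>set es. ori x = (2,1) \<or> ori x = (1,2)" using vals by auto
      have "card {x\<in>set es. ori x = (1,2)} \<le> card {x\<in>set es. ori x = (2,1)}"
        by (rule circ_count[OF es(1) es(3) vals]) simp
      moreover have "card {x\<in>set es. ori x = (2,1)} \<le> card {x\<in>set es. ori x = (1,2)}"
        by (rule circ_count[OF es(1) es(3) vals2]) simp
      ultimately show "card P = card R" unfolding P_def R_def es(2) by simp
    qed
  qed
  show ?thesis using P1 P2 by blast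
qed

end
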